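(* $\mathrm{Log}_{>1}(\mathbb{Q})\subsetneq \mathrm{Log}_{>1}(\mathbb{R})$; that is, $\mathrm{Log}_{>1}(\mathbb{Q})$ is strictly contained in $\mathrm{Log}_{>1}(\mathbb{R})$.
   Context: Modal formulas are built from a countable set of propositional variables using $\bot$, $\to$ and one unary modality $\lozenge$. A frame is a pair $(X,R)$; a valuation assigns subsets of $X$ to variables; $x\models\lozenge\varphi$ iff there is $y$ with $xRy$ and $y\models\varphi$. A formula is valid in a frame if true at every point under every valuation. For a metric space $(X,d)$, $\mathrm{Log}_{>1}(X)$ is the set of modal formulas valid in the frame $(X,R_{>1})$, where $xR_{>1}y$ iff $d(x,y)>1$. $\mathbb{R}$ and $\mathbb{Q}$ carry the metric $d(x,y)=|x-y|$. *)

theory Defs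
  imports "HOL-Analysis.Analysis"
begin

datatype fm = Var nat | Bot | Imp fm fm | Dia fm

fun sat :: "'a set \<Rightarrow> ('a \<Rightarrow> 'a \<Rightarrow> bool) \<Rightarrow> (nat \<Rightarrow> 'a set) \<Rightarrow> 'a \<Rightarrow> fm \<Rightarrow> bool" where
  "sat X R V x (Var p) = (x \<in> V p)"
| "sat X R V x Bot = False"
| "sat X R V x (Imp a b) = (sat X R V x a \<longrightarrow> sat X R V x b)"
| "sat X R V x (Dia a) = (\<exists>y\<in>X. R x y \<and> sat X R V y a)"

definition valid_in :: "'a set \<Rightarrow> ('a \<Rightarrow> 'a \<Rightarrow> bool) \<Rightarrow> fm \<Rightarrow> bool" where
  "valid_in X R \<phi> = (\<forall>V. (\<forall>p. V p \<subseteq> X) \<longrightarrow> (\<forall>x\<in>X. sat X R V x \<phi>))"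

definition Log_gt1 :: "'a::metric_space set \<Rightarrow> fm set" where
  "Log_gt1 X = {\<phi>. valid_in X (\<lambda>x y. dist x y > 1) \<phi>}"

end

theory Submission
  imports Defs "HOL-Library.Countable"
begin

instance fm :: countable by countable_datatype

definition good :: "real set \<Rightarrow> real set \<Rightarrow> (real \<times> real) set \<Rightarrow> bool" where
"good A B F \<longleftrightarrow> finite F \<and> F \<subseteq> A \<times> B \<and>
   (\<forall>p q p' q'. (p,q)\<in>F \<longrightarrow> (p',q')\<in>F \<longrightarrow> (p < p' \<longleftrightarrow> q < q'))"

lemma good_conv: "good A B F \<Longrightarrow> good B A (converse F)"
  unfolding good_def by auto

lemma good_ext:
  assumes g: "good A B F" and f0: "(a0,b0) \<in> F" and amin: "\<forall>a\<in>A. a0 \<le> a"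
    and dense: "\<forall>u\<in>B. \<forall>v\<in>B. u < v \<longrightarrow> (\<exists>w\<in>B. u<w \<and> w<v)"
    and nomax: "\<forall>u\<in>B. \<exists>w\<in>B. u<w" and a: "a\<in>A"
  shows "\<exists>b. good A B (insert (a,b) F)"
proof (cases "a \<in> Domain F")
  case True
  then obtain b where "(a,b)\<in>F" by auto
  then have "insert (a,b) F = F" by auto
  then show ?thesis using g by metis
next
  case False
  have fin: "finite F" and sub: "F \<subseteq> A \<times> B"
    and ord: "\<And>p q p' q'. (p,q)\<in>F \<Longrightarrow> (p',q')\<in>F \<Longrightarrow> (p < p' \<longleftrightarrow> q < q')"
    using g unfolding good_def by auto
  have "a \<noteq> a0" using False f0 by force
  with amin a have a0a: "a0 < a" by force
  define L where "L = {q. \<exists>p. (p,q) \<in> F \<and> p < a}"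
  define U where "U = {q. \<exists>p. (p,q) \<in> F \<and> a < p}"
  have "L \<subseteq> snd ` F" "U \<subseteq> snd ` F" unfolding L_def U_def by force+
  then have finL: "finite L" and finU: "finite U" using fin finite_subset by blast+
  have b0L: "b0 \<in> L" unfolding L_def using f0 a0a by auto
  define l where "l = Max L"
  have lL: "l \<in> L" unfolding l_def using finL b0L Max_in by blast
  have lge: "\<And>q. q \<in> L \<Longrightarrow> q \<le> l" unfolding l_def using finL by simp
  have lB: "l \<in> B" using lL sub unfolding L_def by auto
  have key: "\<And>q q'. q \<in> L \<Longrightarrow> q' \<in> U \<Longrightarrow> q < q'"
  proof -
    fix q q' assume "q \<in> L" "q' \<in> U"
    then obtain p p' where "(p,q)\<in>F" "p<a" "(p',q')\<in>F" "a<p'" unfolding L_def U_def by auto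
    then show "q < q'" using ord[of p q p' q'] by auto
  qed
  obtain b where bB: "b \<in> B" and lb: "l < b" and bu: "\<And>u. u \<in> U \<Longrightarrow> b < u"
  proof (cases "U = {}")
    case True
    then show ?thesis using nomax lB that by blast
  next
    case False
    define u where "u = Min U"
    have uU: "u \<in> U" unfolding u_def using finU False Min_in by blast
    have ule: "\<And>q. q \<in> U \<Longrightarrow> u \<le> q" unfolding u_def using finU by simp
    have uB: "u \<in> B" using uU sub unfolding U_def by auto
    have "l < u" using key lL uU by blast
    then obtain w where "w \<in> B" "l < w" "w < u" using dense lB uB by blast
    then show ?thesis using that ule by force
  qed
  have h1: "\<And>p q. (p,q)\<in>F \<Longrightarrow> (p<a \<longleftrightarrow> q<b)"
  proof -
    fix p q assume pq: "(p,q)\<in>F"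
    have pa: "p \<noteq> a" using pq False by auto
    show "p<a \<longleftrightarrow> q<b"
    proof
      assume "p < a" then have "q \<in> L" unfolding L_def using pq by auto
      then show "q < b" using lge lb by force
    next
      assume qb: "q < b"
      show "p < a"
      proof (rule ccontr)
        assume "\<not> p < a" then have "a < p" using pa by auto
        then have "q \<in> U" unfolding U_def using pq by auto
        then show False using bu qb by force
      qed
    qed
  qed
  have h2: "\<And>p q. (p,q)\<in>F \<Longrightarrow> (a<p \<longleftrightarrow> b<q)"
  proof -
    fix p q assume pq: "(p,q)\<in>F"
    have pa: "p \<noteq> a" using pq False by auto
    show "a<p \<longleftrightarrow> b<q"
    proof
      assume "a < p" then have "q \<in> U" unfolding U_def using pq by auto
      then show "b < q" using bu by force
    next
      assume qb: "b < q"
      show "a < p"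
      proof (rule ccontr)
        assume "\<not> a < p" then have "p < a" using pa by auto
        then have "q \<in> L" unfolding L_def using pq by auto
        then show False using lge lb qb by force
      qed
    qed
  qed
  have "good A B (insert (a,b) F)"
    unfolding good_def using fin sub a bB h1 h2 ord by auto
  then show ?thesis by blast
qed

lemma good_ext2:
  assumes g: "good A B F" and f0: "(a0,b0) \<in> F" and bmin: "\<forall>b\<in>B. b0 \<le> b"
    and dense: "\<forall>u\<in>A. \<forall>v\<in>A. u < v \<longrightarrow> (\<exists>w\<in>A. u<w \<and> w<v)"
    and nomax: "\<forall>u\<in>A. \<exists>w\<in>A. u<w" and b: "b\<in>B"
  shows "\<exists>a. good A B (insert (a,b) F)"
proof -
  have "good B A (converse F)" using good_conv g by blast
  moreover have "(b0,a0) \<in> converse F" using f0 by auto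
  ultimately obtain a where "good B A (insert (b,a) (converse F))"
    using good_ext[of B A "converse F" b0 a0 b] bmin dense nomax b by blast
  then have "good A B (converse (insert (b,a) (converse F)))" using good_conv by blast
  moreover have "converse (insert (b,a) (converse F)) = insert (a,b) F" by auto
  ultimately show ?thesis by metis
qed

primrec chain :: "real set \<Rightarrow> real set \<Rightarrow> (nat\<Rightarrow>real) \<Rightarrow> (nat\<Rightarrow>real) \<Rightarrow> real \<Rightarrow> real \<Rightarrow> nat \<Rightarrow> (real\<times>real) set" where
  "chain A B ea eb a0 b0 0 = {(a0,b0)}"
| "chain A B ea eb a0 b0 (Suc n) =
    (let G = insert (ea n, SOME b. good A B (insert (ea n, b) (chain A B ea eb a0 b0 n))) (chain A B ea eb a0 b0 n)
     in insert (SOME a. good A B (insert (a, eb n) G), eb n) G)"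

lemma back_forth:
  fixes A B :: "real set" and a0 b0 :: real
  assumes cA: "countable A" and cB: "countable B" and a0: "a0\<in>A" and b0: "b0\<in>B"
    and amin: "\<forall>a\<in>A. a0\<le>a" and bmin: "\<forall>b\<in>B. b0\<le>b"
    and dA: "\<forall>u\<in>A. \<forall>v\<in>A. u < v \<longrightarrow> (\<exists>w\<in>A. u<w \<and> w<v)"
    and nA: "\<forall>u\<in>A. \<exists>w\<in>A. u<w"
    and dB: "\<forall>u\<in>B. \<forall>v\<in>B. u < v \<longrightarrow> (\<exists>w\<in>B. u<w \<and> w<v)"
    and nB: "\<forall>u\<in>B. \<exists>w\<in>B. u<w"
  shows "\<exists>g. (\<forall>a\<in>A. g a \<in> B) \<and> B \<subseteq> g ` A \<and> (\<forall>a\<in>A. \<forall>a'\<in>A. a < a' \<longrightarrow> g a < g a')"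
proof -
  define ea where "ea = from_nat_into A"
  define eb where "eb = from_nat_into B"
  have neA: "A \<noteq> {}" using a0 by blast
  have neB: "B \<noteq> {}" using b0 by blast
  have rA: "range ea = A" unfolding ea_def by (rule range_from_nat_into[OF neA cA])
  have rB: "range eb = B" unfolding eb_def by (rule range_from_nat_into[OF neB cB])
  let ?C = "chain A B ea eb a0 b0"
  have eaA: "ea n \<in> A" for n unfolding ea_def by (rule from_nat_into[OF neA])
  have ebB: "eb n \<in> B" for n unfolding eb_def by (rule from_nat_into[OF neB])
  have inv: "good A B (?C n) \<and> (a0,b0) \<in> ?C n" for n
  proof (induction n)
    case 0
    show ?case using a0 b0 unfolding good_def by auto
  next
    case (Suc n)
    define G where "G = insert (ea n, SOME b. good A B (insert (ea n, b) (?C n))) (?C n)"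
    have "\<exists>b. good A B (insert (ea n, b) (?C n))"
      by (rule good_ext[OF conjunct1[OF Suc] conjunct2[OF Suc] amin dB nB eaA])
    then have gG: "good A B G" unfolding G_def by (rule someI_ex)
    have inG: "(a0,b0) \<in> G" using Suc unfolding G_def by blast
    have "\<exists>a. good A B (insert (a, eb n) G)"
      by (rule good_ext2[OF gG inG bmin dA nA ebB])
    then have gS: "good A B (insert (SOME a. good A B (insert (a, eb n) G), eb n) G)" by (rule someI_ex)
    have eqC: "?C (Suc n) = insert (SOME a. good A B (insert (a, eb n) G), eb n) G"
      unfolding G_def chain.simps Let_def by (rule refl)
    have "good A B (?C (Suc n))" unfolding eqC by (rule gS)
    moreover have "(a0,b0) \<in> ?C (Suc n)" unfolding eqC using inG by blast
    ultimately show ?case by (rule conjI)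
  qed
  have step: "?C n \<subseteq> ?C (Suc n)" for n unfolding chain.simps Let_def by blast
  have dom: "ea n \<in> Domain (?C (Suc n))" for n unfolding chain.simps Let_def by blast
  have ran: "eb n \<in> Range (?C (Suc n))" for n unfolding chain.simps Let_def by blast
  have mono: "?C m \<subseteq> ?C n" if "m \<le> n" for m n
    using lift_Suc_mono_le[of ?C, OF step that] .
  have subn: "?C n \<subseteq> A \<times> B" for n
  proof -
    have "good A B (?C n)" using inv by blast
    then show ?thesis unfolding good_def by blast
  qed
  have ordn: "(p < p' \<longleftrightarrow> q < q')" if "(p,q) \<in> ?C n" "(p',q') \<in> ?C n" for n p q p' q'
  proof -
    have "good A B (?C n)" using inv by blast
    then have "\<forall>p q p' q'. (p,q)\<in>?C n \<longrightarrow> (p',q')\<in>?C n \<longrightarrow> (p < p' \<longleftrightarrow> q < q')"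
      unfolding good_def by blast
    then show ?thesis using that by blast
  qed
  define Rl where "Rl = (\<Union>n. ?C n)"
  have Rsub: "Rl \<subseteq> A \<times> B" unfolding Rl_def using subn by blast
  have Rord: "(p < p' \<longleftrightarrow> q < q')" if hyp: "(p,q)\<in>Rl" "(p',q')\<in>Rl" for p q p' q'
  proof -
    obtain m n where mn: "(p,q) \<in> ?C m" "(p',q') \<in> ?C n" using hyp unfolding Rl_def by blast
    have "(p,q) \<in> ?C (max m n)" using mn(1) mono[of m "max m n"] by auto
    moreover have "(p',q') \<in> ?C (max m n)" using mn(2) mono[of n "max m n"] by auto
    ultimately show ?thesis by (rule ordn)
  qed
  have Rfun: "q = q'" if "(p,q)\<in>Rl" "(p,q')\<in>Rl" for p q q'
  proof -
    have "\<not> q < q'" using Rord[OF that(1) that(2)] by simp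
    moreover have "\<not> q' < q" using Rord[OF that(2) that(1)] by simp
    ultimately show ?thesis by linarith
  qed
  have Rdom: "\<exists>b. (a,b) \<in> Rl" if "a \<in> A" for a
  proof -
    have "a \<in> range ea" using rA that by simp
    then obtain n where "a = ea n" by (rule rangeE)
    then show ?thesis using dom[of n] unfolding Rl_def by blast
  qed
  have Rran: "\<exists>a. (a,b) \<in> Rl" if "b \<in> B" for b
  proof -
    have "b \<in> range eb" using rB that by simp
    then obtain n where "b = eb n" by (rule rangeE)
    then show ?thesis using ran[of n] unfolding Rl_def by blast
  qed
  define g where "g a = (SOME b. (a,b) \<in> Rl)" for a
  have gR: "(a, g a) \<in> Rl" if "a \<in> A" for a
    unfolding g_def using Rdom[OF that] by (rule someI_ex)
  have gBB: "\<forall>a\<in>A. g a \<in> B"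
  proof
    fix a assume "a \<in> A"
    then have "(a, g a) \<in> A \<times> B" using Rsub gR by blast
    then show "g a \<in> B" by simp
  qed
  have gsur: "B \<subseteq> g ` A"
  proof
    fix b assume "b \<in> B"
    then obtain a where ab: "(a,b) \<in> Rl" using Rran by blast
    then have aA: "a \<in> A" using Rsub by blast
    then have "g a = b" using Rfun[OF gR[OF aA] ab] by simp
    then show "b \<in> g ` A" using aA by blast
  qed
  have gmono: "\<forall>a\<in>A. \<forall>a'\<in>A. a < a' \<longrightarrow> g a < g a'"
  proof (intro ballI impI)
    fix a a' assume "a \<in> A" "a' \<in> A" "a < a'"
    then show "g a < g a'" using Rord[OF gR[OF \<open>a \<in> A\<close>] gR[OF \<open>a' \<in> A\<close>]] by simp
  qed
  show ?thesis by (rule exI[of _ g]) (intro conjI gBB gsur gmono)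
qed


lemma incl: "Log_gt1 (\<rat> :: real set) \<subseteq> Log_gt1 (UNIV :: real set)"
proof
  fix \<phi> assume \<phi>Q: "\<phi> \<in> Log_gt1 (\<rat> :: real set)"
  let ?R = "\<lambda>x y::real. dist x y > 1"
  have vQ: "\<And>V'. (\<forall>p. V' p \<subseteq> \<rat>) \<Longrightarrow> \<forall>q\<in>\<rat>. sat \<rat> ?R V' q \<phi>"
    using \<phi>Q unfolding Log_gt1_def valid_in_def by blast
  show "\<phi> \<in> Log_gt1 (UNIV :: real set)" unfolding Log_gt1_def valid_in_def
  proof (intro CollectI allI impI ballI)
    fix V :: "nat \<Rightarrow> real set" and x :: real
    define Wt where "Wt a = {w. sat UNIV ?R V w a}" for a
    define up where "up a t = (SOME w. w \<in> Wt a \<and> t < w)" for a t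
    define dn where "dn a t = (SOME w. w \<in> Wt a \<and> w < t)" for a t
    define E where "E = {up a t | a t. t \<in> \<rat> \<and> (\<exists>w\<in>Wt a. t<w)} \<union> {dn a t | a t. t \<in> \<rat> \<and> (\<exists>w\<in>Wt a. w<t)}"
    have "E \<subseteq> (\<lambda>(a,t). up a t) ` (UNIV \<times> \<rat>) \<union> (\<lambda>(a,t). dn a t) ` (UNIV \<times> \<rat>)"
    proof
      fix e assume "e \<in> E"
      then obtain a t where at: "t \<in> \<rat>" "e = up a t \<or> e = dn a t" unfolding E_def by blast
      then have mem: "(a,t) \<in> UNIV \<times> \<rat>" by simp
      have u: "up a t \<in> (\<lambda>(a,t). up a t) ` (UNIV \<times> \<rat>)"
        using imageI[OF mem, of "\<lambda>(a,t). up a t"] by (simp only: prod.case)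
      have d: "dn a t \<in> (\<lambda>(a,t). dn a t) ` (UNIV \<times> \<rat>)"
        using imageI[OF mem, of "\<lambda>(a,t). dn a t"] by (simp only: prod.case)
      show "e \<in> (\<lambda>(a,t). up a t) ` (UNIV \<times> \<rat>) \<union> (\<lambda>(a,t). dn a t) ` (UNIV \<times> \<rat>)"
        using at(2) u d by blast
    qed
    moreover have "countable ((\<lambda>(a,t). up a t) ` (UNIV \<times> \<rat>) \<union> (\<lambda>(a,t). dn a t) ` (UNIV \<times> \<rat>))"
    proof -
      have c: "countable (UNIV \<times> (\<rat>::real set) :: (fm \<times> real) set)"
        by (rule countable_SIGMA) (simp_all add: countable_rat)
      show ?thesis by (rule countable_Un; rule countable_image; rule c)
    qed
    ultimately have cE: "countable E" using countable_subset by blast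
    have Eup: "\<exists>e\<in>E. e \<in> Wt a \<and> t < e" if hw: "w \<in> Wt a" "t < w" for w a t
    proof -
      obtain r where r: "r \<in> \<rat>" "t < r" "r < w" using Rats_dense_in_real hw(2) by blast
      then have ex: "\<exists>w\<in>Wt a. r<w" using hw by blast
      then have "up a r \<in> Wt a \<and> r < up a r" unfolding up_def using someI_ex[of "\<lambda>w. w \<in> Wt a \<and> r < w"] by blast
      moreover have "up a r \<in> E" unfolding E_def using r ex by blast
      ultimately show ?thesis using r by force
    qed
    have Edn: "\<exists>e\<in>E. e \<in> Wt a \<and> e < t" if hw: "w \<in> Wt a" "w < t" for w a t
    proof -
      obtain r where r: "r \<in> \<rat>" "w < r" "r < t" using Rats_dense_in_real hw(2) by blast
      then have ex: "\<exists>w\<in>Wt a. w<r" using hw by blast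
      then have "dn a r \<in> Wt a \<and> dn a r < r" unfolding dn_def using someI_ex[of "\<lambda>w. w \<in> Wt a \<and> w < r"] by blast
      moreover have "dn a r \<in> E" unfolding E_def using r ex by blast
      ultimately show ?thesis using r by force
    qed
    define D where "D = (\<lambda>(e,r). e + r) ` (insert x E \<times> \<rat>)"
    have cD: "countable D" unfolding D_def using cE countable_rat by auto
    have Dshift: "d + r \<in> D" if hd: "d \<in> D" "r \<in> \<rat>" for d r
    proof -
      obtain e r0 where "e \<in> insert x E" "r0 \<in> \<rat>" "d = e + r0" using hd(1) unfolding D_def by auto
      then have "(e, r0 + r) \<in> insert x E \<times> \<rat>" using hd(2) by auto
      then have "(\<lambda>(e,r). e + r) (e, r0 + r) \<in> D" unfolding D_def by (rule imageI)
      then show ?thesis using \<open>d = e + r0\<close> by (simp add: add.assoc)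
    qed
    have ED: "E \<subseteq> D"
    proof
      fix e assume "e \<in> E"
      then have "(e, 0) \<in> insert x E \<times> \<rat>" by auto
      then have "(\<lambda>(e,r). e + r) (e, 0) \<in> D" unfolding D_def by (rule imageI)
      then show "e \<in> D" by simp
    qed
    have xD: "x \<in> D"
    proof -
      have "(x, 0) \<in> insert x E \<times> \<rat>" by auto
      then have "(\<lambda>(e,r). e + r) (x, 0) \<in> D" unfolding D_def by (rule imageI)
      then show "x \<in> D" by simp
    qed
    define A where "A = \<rat> \<inter> {0..<1::real}"
    define B where "B = D \<inter> {x..<x+1}"
    have "\<exists>g. (\<forall>a\<in>A. g a \<in> B) \<and> B \<subseteq> g ` A \<and> (\<forall>a\<in>A. \<forall>a'\<in>A. a < a' \<longrightarrow> g a < g a')"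
    proof (rule back_forth[of A B 0 x])
      show "countable A" unfolding A_def using countable_rat by auto
      show "countable B" unfolding B_def using cD by auto
      show "0 \<in> A" unfolding A_def by auto
      show "x \<in> B" unfolding B_def using xD by auto
      show "\<forall>a\<in>A. 0 \<le> a" unfolding A_def by auto
      show "\<forall>b\<in>B. x \<le> b" unfolding B_def by auto
      show "\<forall>u\<in>A. \<forall>v\<in>A. u < v \<longrightarrow> (\<exists>w\<in>A. u < w \<and> w < v)"
      proof (intro ballI impI)
        fix u v assume "u \<in> A" "v \<in> A" "u < v"
        then obtain r where "r \<in> \<rat>" "u < r" "r < v" using Rats_dense_in_real by blast
        then show "\<exists>w\<in>A. u < w \<and> w < v" using \<open>u \<in> A\<close> \<open>v \<in> A\<close> unfolding A_def by force
      qed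
      show "\<forall>u\<in>A. \<exists>w\<in>A. u < w"
      proof
        fix u assume u: "u \<in> A"
        then have "(u+1)/2 \<in> A" unfolding A_def by auto
        moreover have "u < (u+1)/2" using u unfolding A_def by auto
        ultimately show "\<exists>w\<in>A. u < w" by blast
      qed
      show "\<forall>u\<in>B. \<forall>v\<in>B. u < v \<longrightarrow> (\<exists>w\<in>B. u < w \<and> w < v)"
      proof (intro ballI impI)
        fix u v assume uv: "u \<in> B" "v \<in> B" "u < v"
        then obtain r where r: "r \<in> \<rat>" "0 < r" "r < v - u" using Rats_dense_in_real[of 0 "v-u"] by auto
        then have "u + r \<in> D" using Dshift uv unfolding B_def by auto
        then show "\<exists>w\<in>B. u < w \<and> w < v" using uv r unfolding B_def by (intro bexI[of _ "u+r"]) auto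
      qed
      show "\<forall>u\<in>B. \<exists>w\<in>B. u < w"
      proof
        fix u assume u: "u \<in> B"
        then obtain r where r: "r \<in> \<rat>" "0 < r" "r < x + 1 - u" using Rats_dense_in_real[of 0 "x+1-u"] unfolding B_def by auto
        then have "u + r \<in> D" using Dshift u unfolding B_def by auto
        then show "\<exists>w\<in>B. u < w" using u r unfolding B_def by (intro bexI[of _ "u+r"]) auto
      qed
    qed
    then obtain g where gB: "\<forall>a\<in>A. g a \<in> B" and gs: "B \<subseteq> g ` A"
      and gm: "\<forall>a\<in>A. \<forall>a'\<in>A. a < a' \<longrightarrow> g a < g a'" by blast
    define f where "f q = g (q - of_int \<lfloor>q\<rfloor>) + of_int \<lfloor>q\<rfloor>" for q
    have fr: "q - of_int \<lfloor>q\<rfloor> \<in> A" if "q \<in> \<rat>" for q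
    proof -
      have "q - of_int \<lfloor>q\<rfloor> < 1" using real_of_int_floor_add_one_gt[of q] by linarith
      then show ?thesis unfolding A_def using that by auto
    qed
    have gbnd: "x \<le> g a \<and> g a < x + 1" if "a \<in> A" for a using gB that unfolding B_def by auto
    have fmono: "f q < f q'" if q: "q \<in> \<rat>" "q' \<in> \<rat>" "q < q'" for q q'
    proof (cases "\<lfloor>q\<rfloor> = \<lfloor>q'\<rfloor>")
      case True
      have lt: "q - of_int \<lfloor>q\<rfloor> < q' - of_int \<lfloor>q'\<rfloor>" using True q(3) by simp
      have "g (q - of_int \<lfloor>q\<rfloor>) < g (q' - of_int \<lfloor>q'\<rfloor>)"
        using gm fr[OF q(1)] fr[OF q(2)] lt by blast
      then show ?thesis unfolding f_def using True by simp
    next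
      case False
      have "\<lfloor>q\<rfloor> \<le> \<lfloor>q'\<rfloor>" using q(3) floor_mono[of q q'] by linarith
      with False have "\<lfloor>q\<rfloor> + 1 \<le> \<lfloor>q'\<rfloor>" by auto
      then have "real_of_int \<lfloor>q\<rfloor> + 1 \<le> real_of_int \<lfloor>q'\<rfloor>" by linarith
      moreover have "g (q - of_int \<lfloor>q\<rfloor>) < x + 1" "x \<le> g (q' - of_int \<lfloor>q'\<rfloor>)" using gbnd fr q by auto
      ultimately show ?thesis unfolding f_def by linarith
    qed
    have fiff: "q < q' \<longleftrightarrow> f q < f q'" if "q \<in> \<rat>" "q' \<in> \<rat>" for q q'
    proof
      assume "q < q'" then show "f q < f q'" by (rule fmono[OF that])
    next
      assume fl: "f q < f q'"
      show "q < q'"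
      proof (rule ccontr)
        assume "\<not> q < q'"
        then have "q' < q \<or> q' = q" by auto
        then show False using fmono[OF that(2) that(1)] fl by auto
      qed
    qed
    have fplus: "f (q + 1) = f q + 1" for q
    proof -
      have "\<lfloor>q + 1\<rfloor> = \<lfloor>q\<rfloor> + 1" by simp
      then show ?thesis unfolding f_def by simp
    qed
    have fsurj: "\<exists>q\<in>\<rat>. f q = d" if "d \<in> D" for d
    proof -
      define k where "k = \<lfloor>d - x\<rfloor>"
      have "d + (- of_int k) \<in> D" using Dshift[OF that, of "- of_int k"] by simp
      moreover have "x \<le> d - of_int k" "d - of_int k < x + 1" unfolding k_def by linarith+
      ultimately have "d - of_int k \<in> B" unfolding B_def by auto
      then have "d - of_int k \<in> g ` A" using gs by (rule subsetD[rotated])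
      then obtain a where a: "a \<in> A" "g a = d - of_int k" by (metis imageE)
      have a01: "0 \<le> a" "a < 1" using a unfolding A_def by auto
      have fl: "\<lfloor>a + of_int k\<rfloor> = k" unfolding floor_eq_iff using a01 by auto
      have "a + of_int k \<in> \<rat>" using a unfolding A_def by auto
      moreover have "f (a + of_int k) = d" unfolding f_def fl using a by simp
      ultimately show ?thesis by blast
    qed
    have frel: "1 < dist q q' \<longleftrightarrow> 1 < dist (f q) (f q')" if "q \<in> \<rat>" "q' \<in> \<rat>" for q q'
    proof -
      have r1: "q + 1 \<in> \<rat>" "q' + 1 \<in> \<rat>" using that by auto
      have "q + 1 < q' \<longleftrightarrow> f (q + 1) < f q'" by (rule fiff[OF r1(1) that(2)])
      moreover have "q' + 1 < q \<longleftrightarrow> f (q' + 1) < f q" by (rule fiff[OF r1(2) that(1)])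
      ultimately have "q + 1 < q' \<longleftrightarrow> f q + 1 < f q'" "q' + 1 < q \<longleftrightarrow> f q' + 1 < f q"
        by (simp_all add: fplus)
      then show ?thesis unfolding dist_real_def by linarith
    qed
    define V' where "V' n = {q\<in>\<rat>. f q \<in> V n}" for n
    have truth: "q \<in> \<rat> \<Longrightarrow> sat \<rat> ?R V' q a \<longleftrightarrow> sat UNIV ?R V (f q) a" for a q
    proof (induction a arbitrary: q)
      case (Var n) then show ?case unfolding V'_def by simp
    next
      case Bot then show ?case by simp
    next
      case (Imp a b) then show ?case by simp
    next
      case (Dia a)
      show ?case
      proof
        assume "sat \<rat> ?R V' q (Dia a)"
        then obtain q' where q': "q' \<in> \<rat>" "1 < dist q q'" "sat \<rat> ?R V' q' a" by auto
        have "1 < dist (f q) (f q')" using frel[OF Dia.prems q'(1)] q'(2) by blast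
        moreover have "sat UNIV ?R V (f q') a" using Dia.IH[OF q'(1)] q'(3) by blast
        ultimately show "sat UNIV ?R V (f q) (Dia a)" unfolding sat.simps by blast
      next
        assume "sat UNIV ?R V (f q) (Dia a)"
        then obtain y where y: "1 < dist (f q) y" "y \<in> Wt a" unfolding Wt_def by auto
        have "\<exists>e\<in>E. e \<in> Wt a \<and> 1 < dist (f q) e"
        proof (cases "f q + 1 < y")
          case True
          then obtain e where "e\<in>E" "e \<in> Wt a" "f q + 1 < e" using Eup y by blast
          then show ?thesis unfolding dist_real_def by auto
        next
          case False
          then have "y < f q - 1" using y unfolding dist_real_def by auto
          then obtain e where "e\<in>E" "e \<in> Wt a" "e < f q - 1" using Edn y by blast
          then show ?thesis unfolding dist_real_def by auto
        qed
        then obtain e where e: "e\<in>E" "e \<in> Wt a" "1 < dist (f q) e" by blast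
        then obtain q' where q': "q' \<in> \<rat>" "f q' = e" using fsurj ED by blast
        have "1 < dist q q'" using frel[OF Dia.prems q'(1)] e q' by simp
        moreover have "sat \<rat> ?R V' q' a" using Dia.IH[OF q'(1)] e(2) q'(2) unfolding Wt_def by simp
        ultimately show "sat \<rat> ?R V' q (Dia a)" using q'(1) by auto
      qed
    qed
    obtain q0 where q0: "q0 \<in> \<rat>" "f q0 = x" using fsurj xD by blast
    have "\<forall>p. V' p \<subseteq> \<rat>" unfolding V'_def by auto
    then have "sat \<rat> ?R V' q0 \<phi>" using vQ q0 by blast
    then show "sat UNIV ?R V x \<phi>" using truth q0 by blast
  qed
qed

definition neg :: "fm \<Rightarrow> fm" where "neg a = Imp a Bot"
definition conj :: "fm \<Rightarrow> fm \<Rightarrow> fm" where "conj a b = neg (Imp a (neg b))"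
definition disj :: "fm \<Rightarrow> fm \<Rightarrow> fm" where "disj a b = Imp (neg a) b"
definition iffm :: "fm \<Rightarrow> fm \<Rightarrow> fm" where "iffm a b = conj (Imp a b) (Imp b a)"
definition box :: "fm \<Rightarrow> fm" where "box a = neg (Dia (neg a))"

lemma sat_neg[simp]: "sat X R V x (neg a) = (\<not> sat X R V x a)" by (simp add: neg_def)
lemma sat_conj[simp]: "sat X R V x (conj a b) = (sat X R V x a \<and> sat X R V x b)" by (simp add: conj_def)
lemma sat_disj[simp]: "sat X R V x (disj a b) = (sat X R V x a \<or> sat X R V x b)" by (auto simp add: disj_def)
lemma sat_iffm[simp]: "sat X R V x (iffm a b) = (sat X R V x a \<longleftrightarrow> sat X R V x b)" by (auto simp add: iffm_def)
lemma sat_box[simp]: "sat X R V x (box a) = (\<forall>y\<in>X. R x y \<longrightarrow> sat X R V y a)" by (simp add: box_def)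

definition hyp :: fm where
  "hyp = conj (box (box (iffm (Var 0) (neg (Dia (Var 0))))))
        (conj (box (box (iffm (Var 1) (neg (Dia (Var 1))))))
        (conj (box (box (iffm (Var 2) (neg (Dia (Var 2))))))
        (conj (box (box (neg (conj (Var 0) (Var 1)))))
        (conj (box (box (Imp (Var 2) (disj (Var 0) (Var 1)))))
        (conj (Dia (Dia (conj (Var 2) (neg (Var 0)))))
              (Dia (Dia (conj (Var 2) (neg (Var 1))))))))))"

definition phi0 :: fm where "phi0 = neg hyp"

lemma univ_R:
  assumes "sat UNIV (\<lambda>x y::real. dist x y > 1) V x (box (box a))"
  shows "sat UNIV (\<lambda>x y::real. dist x y > 1) V y a"
proof -
  let ?z = "\<bar>x\<bar> + \<bar>y\<bar> + 2"
  have "1 < dist x ?z" "1 < dist ?z y" by (auto simp: dist_real_def)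
  then show ?thesis using assms by auto
qed

lemma fix_closed:
  fixes P :: "real set"
  assumes "\<forall>y. y \<in> P \<longleftrightarrow> (\<forall>w\<in>P. dist y w \<le> 1)"
  shows "P = (\<Inter>w\<in>P. cball w 1)"
proof (rule set_eqI)
  fix y
  have "y \<in> P \<longleftrightarrow> (\<forall>w\<in>P. dist y w \<le> 1)" using assms by blast
  also have "\<dots> \<longleftrightarrow> y \<in> (\<Inter>w\<in>P. cball w 1)" by (simp add: dist_commute)
  finally show "y \<in> P \<longleftrightarrow> y \<in> (\<Inter>w\<in>P. cball w 1)" .
qed

lemma phi0_R: "phi0 \<in> Log_gt1 (UNIV :: real set)"
  unfolding Log_gt1_def valid_in_def
proof (intro CollectI allI impI ballI)
  fix V :: "nat \<Rightarrow> real set" and x :: real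
  let ?R = "\<lambda>x y::real. dist x y > 1"
  show "sat UNIV ?R V x phi0"
  proof (rule ccontr)
    assume "\<not> sat UNIV ?R V x phi0"
    then have h: "sat UNIV ?R V x hyp" unfolding phi0_def by simp
    let ?P = "V 0" and ?Q = "V 1" and ?S = "V 2"
    have fP: "\<forall>y. y \<in> V n \<longleftrightarrow> (\<forall>w\<in>V n. dist y w \<le> 1)"
      if "sat UNIV ?R V x (box (box (iffm (Var n) (neg (Dia (Var n))))))" for n
    proof
      fix y show "y \<in> V n \<longleftrightarrow> (\<forall>w\<in>V n. dist y w \<le> 1)"
        using univ_R[OF that, of y] by (auto simp: not_less)
    qed
    have hh: "sat UNIV ?R V x (box (box (iffm (Var 0) (neg (Dia (Var 0))))))"
         "sat UNIV ?R V x (box (box (iffm (Var 1) (neg (Dia (Var 1))))))"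
         "sat UNIV ?R V x (box (box (iffm (Var 2) (neg (Dia (Var 2))))))"
         "sat UNIV ?R V x (box (box (neg (conj (Var 0) (Var 1)))))"
         "sat UNIV ?R V x (box (box (Imp (Var 2) (disj (Var 0) (Var 1)))))"
         "sat UNIV ?R V x (Dia (Dia (conj (Var 2) (neg (Var 0)))))"
         "sat UNIV ?R V x (Dia (Dia (conj (Var 2) (neg (Var 1)))))"
      using h unfolding hyp_def sat_conj by blast+
    have eP: "?P = (\<Inter>w\<in>?P. cball w 1)" by (rule fix_closed[OF fP[OF hh(1)]])
    have eQ: "?Q = (\<Inter>w\<in>?Q. cball w 1)" by (rule fix_closed[OF fP[OF hh(2)]])
    have eS: "?S = (\<Inter>w\<in>?S. cball w 1)" by (rule fix_closed[OF fP[OF hh(3)]])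
    have cP: "closed ?P" by (subst eP) (auto intro: closed_INT)
    have cQ: "closed ?Q" by (subst eQ) (auto intro: closed_INT)
    have "convex ?S" by (subst eS) (auto intro!: convex_INT convex_cball)
    then have conS: "connected ?S" by (rule convex_connected)
    have disj: "?P \<inter> ?Q = {}"
    proof -
      have "sat UNIV ?R V y (neg (conj (Var 0) (Var 1)))" for y
        by (rule univ_R[OF hh(4)])
      then show ?thesis by auto
    qed
    have cov: "?S \<subseteq> ?P \<union> ?Q"
    proof -
      have "sat UNIV ?R V y (Imp (Var 2) (disj (Var 0) (Var 1)))" for y
        by (rule univ_R[OF hh(5)])
      then show ?thesis by auto
    qed
    have "\<exists>y. y \<in> ?S \<and> y \<notin> ?P" using hh(6) by auto
    then have nP: "?Q \<inter> ?S \<noteq> {}" using cov by blast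
    have "\<exists>y. y \<in> ?S \<and> y \<notin> ?Q" using hh(7) by auto
    then have nQ: "?P \<inter> ?S \<noteq> {}" using cov by blast
    have nc: "\<not> (\<exists>A B. closed A \<and> closed B \<and> ?S \<subseteq> A \<union> B \<and> A \<inter> B \<inter> ?S = {} \<and> A \<inter> ?S \<noteq> {} \<and> B \<inter> ?S \<noteq> {})"
      by (rule iffD1[OF connected_closed conS])
    have "closed ?P \<and> closed ?Q \<and> ?S \<subseteq> ?P \<union> ?Q \<and> ?P \<inter> ?Q \<inter> ?S = {} \<and> ?P \<inter> ?S \<noteq> {} \<and> ?Q \<inter> ?S \<noteq> {}"
      using cP cQ cov disj nP nQ by auto
    then have "\<exists>A B. closed A \<and> closed B \<and> ?S \<subseteq> A \<union> B \<and> A \<inter> B \<inter> ?S = {} \<and> A \<inter> ?S \<noteq> {} \<and> B \<inter> ?S \<noteq> {}"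
      by (intro exI[of _ ?P] exI[of _ ?Q])
    with nc show False by (rule notE)
  qed
qed

lemma dia_int:
  fixes y a :: real
  shows "(\<exists>z\<in>\<rat>. 1 < dist y z \<and> z \<in> \<rat> \<inter> {a..a+1}) \<longleftrightarrow> (y < a \<or> a + 1 < y)"
proof
  assume "\<exists>z\<in>\<rat>. 1 < dist y z \<and> z \<in> \<rat> \<inter> {a..a+1}"
  then show "y < a \<or> a + 1 < y" by (auto simp: dist_real_def)
next
  assume "y < a \<or> a + 1 < y"
  then show "\<exists>z\<in>\<rat>. 1 < dist y z \<and> z \<in> \<rat> \<inter> {a..a+1}"
  proof
    assume "y < a"
    obtain r where "r \<in> \<rat>" "max a (y+1) < r" "r < a + 1"
      using Rats_dense_in_real[of "max a (y+1)" "a+1"] \<open>y < a\<close> by auto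
    then show ?thesis by (intro bexI[of _ r]) (auto simp: dist_real_def)
  next
    assume "a + 1 < y"
    obtain r where "r \<in> \<rat>" "a < r" "r < min (a+1) (y-1)"
      using Rats_dense_in_real[of a "min (a+1) (y-1)"] \<open>a + 1 < y\<close> by auto
    then show ?thesis by (intro bexI[of _ r]) (auto simp: dist_real_def)
  qed
qed

lemma phi0_Q: "phi0 \<notin> Log_gt1 (\<rat> :: real set)"
proof
  assume "phi0 \<in> Log_gt1 (\<rat> :: real set)"
  then have vQ: "\<And>V. (\<forall>p. V p \<subseteq> \<rat>) \<Longrightarrow> \<forall>q\<in>\<rat>. sat \<rat> (\<lambda>x y::real. dist x y > 1) V q phi0"
    unfolding Log_gt1_def valid_in_def by blast
  have "\<not> {0<..<1::real} \<subseteq> \<rat>"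
    using countable_subset countable_rat uncountable_open_interval[of "0::real" 1] by auto
  then obtain c :: real where c0: "c \<in> {0<..<1}" "c \<notin> \<rat>" by blast
  then have c: "0 < c" "c < 1" "c \<notin> \<rat>" by auto
  define V where "V n = (if n = 0 then \<rat> \<inter> {c-1..c-1+1} else if n = 1 then \<rat> \<inter> {c..c+1}
      else if n = 2 then \<rat> \<inter> {0..0+1} else {})" for n :: nat
  let ?R = "\<lambda>x y::real. dist x y > 1"
  have Vs: "\<forall>p. V p \<subseteq> \<rat>" unfolding V_def by auto
  have V0: "V 0 = \<rat> \<inter> {c-1..c-1+1}" and V1: "V 1 = \<rat> \<inter> {c..c+1}" and V2: "V 2 = \<rat> \<inter> {0..0+1}"
    unfolding V_def by auto
  have A0: "sat \<rat> ?R V y (iffm (Var 0) (neg (Dia (Var 0))))" if "y \<in> \<rat>" for y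
    using that dia_int[of y "c-1"] by (simp only: sat.simps sat_iffm sat_neg V0) auto
  have A1: "sat \<rat> ?R V y (iffm (Var 1) (neg (Dia (Var 1))))" if "y \<in> \<rat>" for y
    using that dia_int[of y "c"] by (simp only: sat.simps sat_iffm sat_neg V1) auto
  have A2: "sat \<rat> ?R V y (iffm (Var 2) (neg (Dia (Var 2))))" if "y \<in> \<rat>" for y
    using that dia_int[of y 0] by (simp only: sat.simps sat_iffm sat_neg V2) auto
  have A3: "sat \<rat> ?R V y (neg (conj (Var 0) (Var 1)))" if "y \<in> \<rat>" for y
  proof -
    have "y \<noteq> c" using that c by auto
    then show ?thesis unfolding V_def by auto
  qed
  have A4: "sat \<rat> ?R V y (Imp (Var 2) (disj (Var 0) (Var 1)))" if "y \<in> \<rat>" for y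
    using c that unfolding V_def by auto
  have d03: "1 < dist (0::real) 3" "1 < dist (3::real) 1" "1 < dist (3::real) 0" by (auto simp: dist_real_def)
  have A5: "sat \<rat> ?R V 0 (Dia (Dia (conj (Var 2) (neg (Var 0)))))"
  proof -
    have "sat \<rat> ?R V 1 (conj (Var 2) (neg (Var 0)))" using c unfolding V_def by auto
    moreover have "(3::real) \<in> \<rat>" "(1::real) \<in> \<rat>" by auto
    ultimately show ?thesis using d03 by (simp only: sat.simps) blast
  qed
  have A6: "sat \<rat> ?R V 0 (Dia (Dia (conj (Var 2) (neg (Var 1)))))"
  proof -
    have "sat \<rat> ?R V 0 (conj (Var 2) (neg (Var 1)))" using c unfolding V_def by auto
    moreover have "(3::real) \<in> \<rat>" "(0::real) \<in> \<rat>" by auto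
    ultimately show ?thesis using d03 by (simp only: sat.simps) blast
  qed
  have "sat \<rat> ?R V 0 hyp"
    unfolding hyp_def using A0 A1 A2 A3 A4 A5 A6 by (simp only: sat_conj sat_box) blast
  moreover have "sat \<rat> ?R V 0 phi0" using vQ[OF Vs] by auto
  ultimately show False unfolding phi0_def by simp
qed

theorem theorem4p8:
  shows "Log_gt1 (\<rat> :: real set) \<subset> Log_gt1 (UNIV :: real set)"
  using incl phi0_R phi0_Q by blast

end
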